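(* Let $(\mathbf v,p,\varphi,\mu)$ be a sufficiently smooth solution on $\Omega\times(0,T)$, $\Omega\subset\mathbb R^d$, of $$\partial_t(\rho\mathbf v)+\operatorname{div}(\rho\mathbf v\otimes\mathbf v)-\operatorname{div}(2\eta(\varphi)D\mathbf v)+\nabla p=-\operatorname{div}(a(\varphi,\nabla\varphi)\nabla\varphi\otimes\nabla\varphi),\qquad\operatorname{div}\mathbf v=0,$$ $$\partial_t\widehat{\rho c}(\varphi)+\mathbf v\cdot\nabla\widehat{\rho c}(\varphi)=\operatorname{div}(\tilde m(\varphi)\nabla\mu),\qquad \frac{\partial\widehat{\rho c}}{\partial\varphi}\mu=\frac{\partial f}{\partial\varphi}(\varphi,\nabla\varphi)-\operatorname{div}(a(\varphi,\nabla\varphi)\nabla\varphi)-\frac{\partial\rho}{\partial\varphi}\frac{|\mathbf v|^2}{2},$$ where $\rho=\hat\rho(\varphi)$, $\widehat{\rho c}$, $f$ are smooth, $\eta\ge0$, $\tilde m\ge0$, and $a$ satisfies $\frac{\partial f}{\partial\nabla\varphi}(\varphi,\nabla\varphi)=a(\varphi,\nabla\varphi)\nabla\varphi$. Set $e=\hat\rho(\varphi)\frac{|\mathbf v|^2}2+f(\varphi,\nabla\varphi)$, $\mathbf J=-\tilde m(\varphi)\nabla\mu$, $\boldsymbol\xi=\frac{\partial f}{\partial\nabla\varphi}(\varphi,\nabla\varphi)$, $\dot\varphi=\partial_t\varphi+\mathbf v\cdot\nabla\varphi$ and $\mathbf T=2\eta(\varphi)D\mathbf v-\nabla\varphi\otimes\boldsymbol\xi-p\mathbf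 I$. Then the local dissipation identity $$\partial_te+\mathbf v\cdot\nabla e-\operatorname{div}(\mathbf T\mathbf v)-\operatorname{div}(\dot\varphi\,\boldsymbol\xi)+\operatorname{div}(\mu\mathbf J)=-\big(2\eta(\varphi)|D\mathbf v|^2+\tilde m(\varphi)|\nabla\mu|^2\big)\le0$$ holds pointwise.
   Context: $D\mathbf v=\frac12(\nabla\mathbf v+\nabla\mathbf v^T)$; $\mathbf a\otimes\mathbf b=\mathbf a\mathbf b^T$; the divergence of a matrix field is row-wise; $\mathbf T\mathbf v$ is the matrix–vector product with $\mathbf T$ symmetric. Here $\varphi$ is an order parameter for a mixture of two incompressible fluids, $\hat\rho(\varphi)$ the total mass density and $\widehat{\rho c}(\varphi)$ the difference of the partial mass densities, both expressed as functions of $\varphi$; $\frac{\partial f}{\partial\varphi}$, $\frac{\partial f}{\partial\nabla\varphi}$ are partial derivatives of $f(z,\mathbf p)$ in $z$ and $\mathbf p$. *)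

theory Defs
  imports "HOL-Analysis.Analysis"
begin

fun iter_fd :: "'a list \<Rightarrow> ('a::real_normed_vector \<Rightarrow> 'b::real_normed_vector) \<Rightarrow> 'a \<Rightarrow> 'b" where
  "iter_fd [] u = u"
| "iter_fd (b # bs) u = (\<lambda>z. frechet_derivative (iter_fd bs u) (at z) b)"

definition smooth_on :: "'a::euclidean_space set \<Rightarrow> ('a \<Rightarrow> 'b::real_normed_vector) \<Rightarrow> bool" where
  "smooth_on S u \<longleftrightarrow> (\<forall>bs. set bs \<subseteq> Basis \<longrightarrow> (\<forall>z\<in>S. iter_fd bs u differentiable (at z)))"

definition dt :: "((real^'d) \<times> real \<Rightarrow> 'b::real_normed_vector) \<Rightarrow> (real^'d) \<times> real \<Rightarrow> 'b" where
  "dt u z = frechet_derivative u (at z) (0, 1)"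

definition dx :: "'d \<Rightarrow> ((real^'d) \<times> real \<Rightarrow> 'b::real_normed_vector) \<Rightarrow> (real^'d) \<times> real \<Rightarrow> 'b" where
  "dx i u z = frechet_derivative u (at z) (axis i 1, 0)"

definition grad :: "((real^'d::finite) \<times> real \<Rightarrow> real) \<Rightarrow> (real^'d) \<times> real \<Rightarrow> real^'d" where
  "grad u z = (\<chi> i. dx i u z)"

definition divg :: "((real^'d::finite) \<times> real \<Rightarrow> real^'d) \<Rightarrow> (real^'d) \<times> real \<Rightarrow> real" where
  "divg w z = (\<Sum>i\<in>UNIV. dx i (\<lambda>y. w y $ i) z)"

text \<open>Row-wise divergence of a matrix field (M $ i $ j = entry in row i, column j).\<close>
definition divm :: "((real^'d::finite) \<times> real \<Rightarrow> real^'d^'d) \<Rightarrow> (real^'d) \<times> real \<Rightarrow> real^'d" where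
  "divm M z = (\<chi> i. \<Sum>j\<in>UNIV. dx j (\<lambda>y. M y $ i $ j) z)"

definition symgrad :: "((real^'d::finite) \<times> real \<Rightarrow> real^'d) \<Rightarrow> (real^'d) \<times> real \<Rightarrow> real^'d^'d" where
  "symgrad v z = (\<chi> i j. (dx j (\<lambda>y. v y $ i) z + dx i (\<lambda>y. v y $ j) z) / 2)"

definition outer :: "real^'d::finite \<Rightarrow> real^'d \<Rightarrow> real^'d^'d" where
  "outer a b = (\<chi> i j. a $ i * b $ j)"

definition frob2 :: "real^'d::finite^'d \<Rightarrow> real" where
  "frob2 A = (\<Sum>i\<in>UNIV. \<Sum>j\<in>UNIV. (A $ i $ j)^2)"

definition df_dphi :: "(real \<Rightarrow> real^'d \<Rightarrow> real) \<Rightarrow> real \<Rightarrow> real^'d \<Rightarrow> real" where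
  "df_dphi f z p = deriv (\<lambda>s. f s p) z"

definition df_dgrad :: "(real \<Rightarrow> real^'d::finite \<Rightarrow> real) \<Rightarrow> real \<Rightarrow> real^'d \<Rightarrow> real^'d" where
  "df_dgrad f z p = (\<chi> i. deriv (\<lambda>s. f z (p + s *\<^sub>R axis i 1)) 0)"

end

theory Submission
  imports Defs
begin


lemma fdI: "(u has_derivative U) (at z) \<Longrightarrow> frechet_derivative u (at z) b = U b"
  by (metis frechet_derivative_at)

lemma fdW: "u differentiable (at z) \<Longrightarrow> (u has_derivative frechet_derivative u (at z)) (at z)"
  using frechet_derivative_works by blast

lemma fd_add: "u differentiable (at z) \<Longrightarrow> w differentiable (at z) \<Longrightarrow>
  frechet_derivative (\<lambda>y. u y + w y) (at z) b = frechet_derivative u (at z) b + frechet_derivative w (at z) b"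
  by (rule fdI) (intro has_derivative_add fdW)

lemma fd_diff: "u differentiable (at z) \<Longrightarrow> w differentiable (at z) \<Longrightarrow>
  frechet_derivative (\<lambda>y. u y - w y) (at z) b = frechet_derivative u (at z) b - frechet_derivative w (at z) b"
  by (rule fdI) (intro has_derivative_diff fdW)

lemma fd_minus: "u differentiable (at z) \<Longrightarrow>
  frechet_derivative (\<lambda>y. - u y) (at z) b = - frechet_derivative u (at z) b"
  by (rule fdI) (intro has_derivative_minus fdW)

lemma fd_divc:
  fixes u :: "'a::real_normed_vector \<Rightarrow> real"
  shows "u differentiable (at z) \<Longrightarrow> frechet_derivative (\<lambda>y. u y / c) (at z) b = frechet_derivative u (at z) b / c"
proof -
  assume d: "u differentiable (at z)"
  have "((\<lambda>y. u y * inverse c) has_derivative (\<lambda>h. u z * 0 + frechet_derivative u (at z) h * inverse c)) (at z)"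
    by (intro has_derivative_mult fdW d has_derivative_const)
  hence "((\<lambda>y. u y / c) has_derivative (\<lambda>h. frechet_derivative u (at z) h / c)) (at z)"
    by (simp add: divide_inverse)
  thus ?thesis by (rule fdI)
qed

lemma diff_divc:
  fixes u :: "'a::real_normed_vector \<Rightarrow> real"
  shows "u differentiable (at z) \<Longrightarrow> (\<lambda>y. u y / c) differentiable (at z)"
  unfolding divide_inverse by (intro differentiable_mult) auto

lemma fd_const: "frechet_derivative (\<lambda>y. c) (at z) b = 0"
  by simp

lemma fd_mult:
  fixes u w :: "'a::real_normed_vector \<Rightarrow> real"
  shows "u differentiable (at z) \<Longrightarrow> w differentiable (at z) \<Longrightarrow>
  frechet_derivative (\<lambda>y. u y * w y) (at z) b = u z * frechet_derivative w (at z) b + frechet_derivative u (at z) b * w z"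
  by (rule fdI) (intro has_derivative_mult fdW)

lemma fd_scaleR:
  fixes u :: "'a::real_normed_vector \<Rightarrow> real" and w :: "'a \<Rightarrow> 'b::real_normed_vector"
  shows "u differentiable (at z) \<Longrightarrow> w differentiable (at z) \<Longrightarrow>
  frechet_derivative (\<lambda>y. u y *\<^sub>R w y) (at z) b = u z *\<^sub>R frechet_derivative w (at z) b + frechet_derivative u (at z) b *\<^sub>R w z"
  by (rule fdI) (intro has_derivative_scaleR fdW)

lemma fd_sum:
  assumes "finite I" "\<And>i. i \<in> I \<Longrightarrow> f i differentiable (at z)"
  shows "frechet_derivative (\<lambda>y. \<Sum>i\<in>I. f i y) (at z) b = (\<Sum>i\<in>I. frechet_derivative (f i) (at z) b)"
proof -
  have "((\<lambda>y. \<Sum>i\<in>I. f i y) has_derivative (\<lambda>h. \<Sum>i\<in>I. frechet_derivative (f i) (at z) h)) (at z)"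
    using assms by (intro has_derivative_sum fdW) auto
  thus ?thesis by (rule fdI)
qed

lemma diff_nth: "w differentiable (at z) \<Longrightarrow> (\<lambda>y. w y $ i) differentiable (at z)"
  by (rule differentiable_compose[where f="\<lambda>x. x $ i"])
     (auto intro: bounded_linear_imp_differentiable bounded_linear_vec_nth)

lemma fd_nth: "w differentiable (at z) \<Longrightarrow>
  frechet_derivative (\<lambda>y. w y $ i) (at z) b = frechet_derivative w (at z) b $ i"
  by (rule fdI) (intro bounded_linear.has_derivative[OF bounded_linear_vec_nth] fdW)

lemma fd_comp1:
  fixes g :: "real \<Rightarrow> real" and u :: "'a::real_normed_vector \<Rightarrow> real"
  assumes "g differentiable (at (u z))" "u differentiable (at z)"
  shows "frechet_derivative (\<lambda>y. g (u y)) (at z) b = deriv g (u z) * frechet_derivative u (at z) b"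
proof -
  have "(g has_real_derivative deriv g (u z)) (at (u z))"
    using assms(1) DERIV_deriv_iff_real_differentiable by blast
  hence "(g has_derivative (\<lambda>h. deriv g (u z) * h)) (at (u z))"
    by (simp add: has_field_derivative_def)
  hence "((\<lambda>y. g (u y)) has_derivative (\<lambda>h. deriv g (u z) * frechet_derivative u (at z) h)) (at z)"
    using has_derivative_compose[OF fdW[OF assms(2)]] by blast
  thus ?thesis by (rule fdI)
qed

lemma diff_comp1:
  fixes g :: "real \<Rightarrow> real" and u :: "'a::real_normed_vector \<Rightarrow> real"
  shows "g differentiable (at (u z)) \<Longrightarrow> u differentiable (at z) \<Longrightarrow> (\<lambda>y. g (u y)) differentiable (at z)"
  by (rule differentiable_compose)

lemma fd_local:
  assumes "open U" "z \<in> U" "\<And>y. y \<in> U \<Longrightarrow> u y = w y"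
  shows "frechet_derivative u (at z) = frechet_derivative w (at z)"
proof -
  have "\<And>D. (u has_derivative D) (at z) \<longleftrightarrow> (w has_derivative D) (at z)"
    using assms has_derivative_transform_within_open[of _ _ z UNIV U] by metis
  thus ?thesis unfolding frechet_derivative_def by simp
qed

lemma diff_local:
  assumes "open U" "z \<in> U" "\<And>y. y \<in> U \<Longrightarrow> u y = w y" "u differentiable (at z)"
  shows "w differentiable (at z)"
  using assms has_derivative_transform_within_open[of u _ z UNIV U w] unfolding differentiable_def by metis

lemma vec_as_sum: "(\<chi> i. h i) = (\<Sum>i\<in>UNIV. h i *\<^sub>R axis i (1::real))"
proof -
  have "(\<Sum>x\<in>UNIV. h x * (if i = x then 1 else 0)) = h i" for i
    by (simp add: if_distrib[of "\<lambda>t. h _ * t"] cong: if_cong)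
  thus ?thesis by (simp add: vec_eq_iff axis_def)
qed



lemma fd_scale_dir:
  "u differentiable (at p) \<Longrightarrow> frechet_derivative u (at p) (c *\<^sub>R a) = c *\<^sub>R frechet_derivative u (at p) a"
  by (drule linear_frechet_derivative) (simp add: linear_scale)

lemma line_deriv:
  fixes u :: "'a::real_normed_vector \<Rightarrow> real"
  assumes "u differentiable (at (q + t *\<^sub>R a))"
  shows "((\<lambda>t. u (q + t *\<^sub>R a)) has_derivative (\<lambda>h. h * frechet_derivative u (at (q + t *\<^sub>R a)) a)) (at t within X)"
proof -
  have l: "((\<lambda>t. q + t *\<^sub>R a) has_derivative (\<lambda>h. h *\<^sub>R a)) (at t within X)"
    by (auto intro!: derivative_eq_intros)
  have "((\<lambda>t. u (q + t *\<^sub>R a)) has_derivative (\<lambda>h. frechet_derivative u (at (q + t *\<^sub>R a)) (h *\<^sub>R a))) (at t within X)"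
    using has_derivative_in_compose[OF l has_derivative_subset[OF fdW[OF assms]]] by (simp add: o_def)
  thus ?thesis using fd_scale_dir[OF assms] by simp
qed

lemma schwarz_half:
  fixes u :: "'a::real_normed_vector \<Rightarrow> real"
  assumes S: "open S" and sub: "\<And>t r. 0 \<le> t \<Longrightarrow> t \<le> s \<Longrightarrow> 0 \<le> r \<Longrightarrow> r \<le> s \<Longrightarrow> z + t *\<^sub>R a + r *\<^sub>R b \<in> S"
    and s: "0 < s"
    and du: "\<forall>y\<in>S. u differentiable (at y)"
    and da: "\<forall>y\<in>S. (\<lambda>w. frechet_derivative u (at w) a) differentiable (at y)"
  shows "\<exists>t r. 0 \<le> t \<and> t \<le> s \<and> 0 \<le> r \<and> r \<le> s \<and>
    u (z + s *\<^sub>R a + s *\<^sub>R b) - u (z + s *\<^sub>R a) - u (z + s *\<^sub>R b) + u z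
     = s^2 * frechet_derivative (\<lambda>w. frechet_derivative u (at w) a) (at (z + t *\<^sub>R a + r *\<^sub>R b)) b"
proof -
  define Ua where "Ua = (\<lambda>w. frechet_derivative u (at w) a)"
  define g where "g = (\<lambda>t. u ((z + s *\<^sub>R b) + t *\<^sub>R a) - u (z + t *\<^sub>R a))"
  have gd: "(g has_derivative (\<lambda>h. h * (Ua (z + s *\<^sub>R b + t *\<^sub>R a) - Ua (z + t *\<^sub>R a)))) (at t within {0..s})"
    if "0 \<le> t" "t \<le> s" for t
  proof -
    have p1: "z + s *\<^sub>R b + t *\<^sub>R a \<in> S" using sub[of t s] that s by (simp add: algebra_simps)
    have p2: "z + t *\<^sub>R a \<in> S" using sub[of t 0] that s by simp
    show ?thesis unfolding g_def Ua_def
      using has_derivative_diff[OF line_deriv[of u "z + s *\<^sub>R b" t a "{0..s}"] line_deriv[of u z t a "{0..s}"]]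
        du p1 p2 by (simp add: algebra_simps)
  qed
  obtain t where t: "t \<in> {0<..<s}" and gt: "g s - g 0 = (s - 0) * (Ua (z + s *\<^sub>R b + t *\<^sub>R a) - Ua (z + t *\<^sub>R a))"
    using mvt_simple[OF s gd] by auto
  define k where "k = (\<lambda>r. Ua ((z + t *\<^sub>R a) + r *\<^sub>R b))"
  have kd: "(k has_derivative (\<lambda>h. h * frechet_derivative Ua (at (z + t *\<^sub>R a + r *\<^sub>R b)) b)) (at r within {0..s})"
    if "0 \<le> r" "r \<le> s" for r
  proof -
    have "z + t *\<^sub>R a + r *\<^sub>R b \<in> S" using sub[of t r] that t by simp
    thus ?thesis unfolding k_def using line_deriv[of Ua "z + t *\<^sub>R a" r b] da unfolding Ua_def by auto
  qed
  obtain r where r: "r \<in> {0<..<s}" and kr: "k s - k 0 = (s - 0) * frechet_derivative Ua (at (z + t *\<^sub>R a + r *\<^sub>R b)) b"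
    using mvt_simple[OF s kd] by auto
  have "u (z + s *\<^sub>R a + s *\<^sub>R b) - u (z + s *\<^sub>R a) - u (z + s *\<^sub>R b) + u z = g s - g 0"
    unfolding g_def by (simp add: algebra_simps)
  also have "\<dots> = s * (k s - k 0)" unfolding gt k_def by (simp add: algebra_simps)
  also have "\<dots> = s^2 * frechet_derivative Ua (at (z + t *\<^sub>R a + r *\<^sub>R b)) b"
    unfolding kr by (simp add: power2_eq_square)
  finally show ?thesis unfolding Ua_def using t r by (intro exI[of _ t] exI[of _ r]) auto
qed

lemma schwarz:
  fixes u :: "'a::real_normed_vector \<Rightarrow> real"
  assumes S: "open S" "z \<in> S"
    and du: "\<forall>y\<in>S. u differentiable (at y)"
    and da: "\<forall>y\<in>S. (\<lambda>w. frechet_derivative u (at w) a) differentiable (at y)"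
    and db: "\<forall>y\<in>S. (\<lambda>w. frechet_derivative u (at w) b) differentiable (at y)"
    and ca: "continuous_on S (\<lambda>y. frechet_derivative (\<lambda>w. frechet_derivative u (at w) a) (at y) b)"
    and cb: "continuous_on S (\<lambda>y. frechet_derivative (\<lambda>w. frechet_derivative u (at w) b) (at y) a)"
  shows "frechet_derivative (\<lambda>w. frechet_derivative u (at w) a) (at z) b
       = frechet_derivative (\<lambda>w. frechet_derivative u (at w) b) (at z) a"
proof (rule ccontr)
  define A where "A = (\<lambda>y. frechet_derivative (\<lambda>w. frechet_derivative u (at w) a) (at y) b)"
  define B where "B = (\<lambda>y. frechet_derivative (\<lambda>w. frechet_derivative u (at w) b) (at y) a)"
  assume "\<not> ?thesis"
  hence ne: "A z \<noteq> B z" unfolding A_def B_def .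
  define e where "e = \<bar>A z - B z\<bar> / 2"
  have e: "e > 0" using ne unfolding e_def by simp
  have cA: "isCont A z" using ca S continuous_on_eq_continuous_at unfolding A_def by blast
  have cB: "isCont B z" using cb S continuous_on_eq_continuous_at unfolding B_def by blast
  obtain d1 where d1: "d1 > 0" "\<And>y. dist y z < d1 \<Longrightarrow> dist (A y) (A z) < e"
    using cA e unfolding continuous_at_eps_delta by blast
  obtain d2 where d2: "d2 > 0" "\<And>y. dist y z < d2 \<Longrightarrow> dist (B y) (B z) < e"
    using cB e unfolding continuous_at_eps_delta by blast
  obtain d3 where d3: "d3 > 0" "ball z d3 \<subseteq> S" using S open_contains_ball by blast
  define d where "d = min d1 (min d2 d3)"
  have d: "d > 0" using d1 d2 d3 unfolding d_def by simp
  define R where "R = norm a + norm b + 1"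
  have R: "R > 0" unfolding R_def by (simp add: add_nonneg_pos)
  define s where "s = d / (2 * R)"
  have s: "s > 0" unfolding s_def using d R by simp
  have close: "dist (z + t *\<^sub>R a + r *\<^sub>R b) z < d" if "0 \<le> t" "t \<le> s" "0 \<le> r" "r \<le> s" for t r
  proof -
    have "dist (z + t *\<^sub>R a + r *\<^sub>R b) z = norm (t *\<^sub>R a + r *\<^sub>R b)" by (simp add: dist_norm)
    also have "\<dots> \<le> t * norm a + r * norm b" using that
      by (metis abs_of_nonneg norm_scaleR norm_triangle_ineq)
    also have "\<dots> \<le> s * norm a + s * norm b" using that by (intro add_mono mult_right_mono) auto
    also have "\<dots> < s * R" using s unfolding R_def by (simp add: algebra_simps)
    also have "\<dots> = d / 2" unfolding s_def using R by simp
    finally show ?thesis using d by simp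
  qed
  have sub: "z + t *\<^sub>R a + r *\<^sub>R b \<in> S" if "0 \<le> t" "t \<le> s" "0 \<le> r" "r \<le> s" for t r
    using close[OF that] d3(2) unfolding d_def by (auto simp: dist_commute)
  have sub': "z + t *\<^sub>R b + r *\<^sub>R a \<in> S" if "0 \<le> t" "t \<le> s" "0 \<le> r" "r \<le> s" for t r
    using sub[OF that(3,4,1,2)] by (simp add: algebra_simps)
  obtain t1 r1 where tr1: "0 \<le> t1" "t1 \<le> s" "0 \<le> r1" "r1 \<le> s" and
    h1: "u (z + s *\<^sub>R a + s *\<^sub>R b) - u (z + s *\<^sub>R a) - u (z + s *\<^sub>R b) + u z = s^2 * A (z + t1 *\<^sub>R a + r1 *\<^sub>R b)"
    using schwarz_half[OF S(1) sub s du da] unfolding A_def by blast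
  obtain t2 r2 where tr2: "0 \<le> t2" "t2 \<le> s" "0 \<le> r2" "r2 \<le> s" and
    h2: "u (z + s *\<^sub>R b + s *\<^sub>R a) - u (z + s *\<^sub>R b) - u (z + s *\<^sub>R a) + u z = s^2 * B (z + t2 *\<^sub>R b + r2 *\<^sub>R a)"
    using schwarz_half[OF S(1) sub' s du db] unfolding B_def by blast
  have "s^2 * A (z + t1 *\<^sub>R a + r1 *\<^sub>R b) = s^2 * B (z + t2 *\<^sub>R b + r2 *\<^sub>R a)"
    using h1 h2 by (simp add: algebra_simps)
  hence eq: "A (z + t1 *\<^sub>R a + r1 *\<^sub>R b) = B (z + t2 *\<^sub>R b + r2 *\<^sub>R a)" using s by simp
  have "dist (A (z + t1 *\<^sub>R a + r1 *\<^sub>R b)) (A z) < e"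
    using d1(2) close[OF tr1] unfolding d_def by simp
  moreover have "dist (B (z + t2 *\<^sub>R b + r2 *\<^sub>R a)) (B z) < e"
    using d2(2) close[OF tr2(3,4,1,2)] unfolding d_def by (simp add: algebra_simps)
  ultimately have "\<bar>A z - B z\<bar> < 2 * e" using eq by (simp add: dist_real_def)
  thus False unfolding e_def by simp
qed



lemma smooth_D0: "smooth_on S u \<Longrightarrow> y \<in> S \<Longrightarrow> u differentiable (at y)"
  unfolding smooth_on_def by (metis empty_subsetI iter_fd.simps(1) list.set(1))

lemma smooth_D1: "smooth_on S u \<Longrightarrow> b \<in> Basis \<Longrightarrow> y \<in> S \<Longrightarrow> (\<lambda>w. frechet_derivative u (at w) b) differentiable (at y)"
  unfolding smooth_on_def
  by (drule spec[of _ "[b]"]) simp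

lemma smooth_D2: "smooth_on S u \<Longrightarrow> b1 \<in> Basis \<Longrightarrow> b2 \<in> Basis \<Longrightarrow> y \<in> S \<Longrightarrow>
   (\<lambda>w. frechet_derivative (\<lambda>x. frechet_derivative u (at x) b1) (at w) b2) differentiable (at y)"
  unfolding smooth_on_def
  by (drule spec[of _ "[b2, b1]"]) simp

lemma basis_x: "((axis i 1, 0) :: (real^'d::finite) \<times> real) \<in> Basis"
  by (auto simp: Basis_prod_def Basis_vec_def)

lemma basis_t: "((0, 1) :: (real^'d::finite) \<times> real) \<in> Basis"
  by (auto simp: Basis_prod_def)

lemma basis_q: "((0, axis k 1) :: real \<times> (real^'d::finite)) \<in> Basis"
  by (auto simp: Basis_prod_def Basis_vec_def)

lemma basis_s: "((1, 0) :: real \<times> (real^'d::finite)) \<in> Basis"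
  by (auto simp: Basis_prod_def)

lemma line_deriv_real:
  fixes F :: "'a::real_normed_vector \<Rightarrow> real"
  assumes "F differentiable (at (q + s *\<^sub>R d))"
  shows "deriv (\<lambda>s. F (q + s *\<^sub>R d)) s = frechet_derivative F (at (q + s *\<^sub>R d)) d"
proof -
  have "((\<lambda>s. F (q + s *\<^sub>R d)) has_derivative (\<lambda>h. h * frechet_derivative F (at (q + s *\<^sub>R d)) d)) (at s)"
    using line_deriv[OF assms] .
  hence "((\<lambda>s. F (q + s *\<^sub>R d)) has_real_derivative frechet_derivative F (at (q + s *\<^sub>R d)) d) (at s)"
    unfolding has_field_derivative_def by (simp add: mult.commute[of _ "frechet_derivative F _ _"])
  thus ?thesis by (rule DERIV_imp_deriv)
qed

lemma dphi_F:
  fixes f :: "real \<Rightarrow> real^'d::finite \<Rightarrow> real"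
  assumes "\<forall>w. (\<lambda>w. f (fst w) (snd w)) differentiable (at w)"
  shows "df_dphi f s q = frechet_derivative (\<lambda>w. f (fst w) (snd w)) (at (s, q)) (1, 0)"
proof -
  have "deriv (\<lambda>t. (\<lambda>w. f (fst w) (snd w)) ((0, q) + t *\<^sub>R (1, 0))) s
      = frechet_derivative (\<lambda>w. f (fst w) (snd w)) (at ((0, q) + s *\<^sub>R (1, 0))) (1, 0)"
    using assms by (intro line_deriv_real) auto
  thus ?thesis unfolding df_dphi_def by simp
qed

lemma dgrad_F:
  fixes f :: "real \<Rightarrow> real^'d::finite \<Rightarrow> real"
  assumes "\<forall>w. (\<lambda>w. f (fst w) (snd w)) differentiable (at w)"
  shows "df_dgrad f s q $ k = frechet_derivative (\<lambda>w. f (fst w) (snd w)) (at (s, q)) (0, axis k 1)"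
proof -
  have "deriv (\<lambda>t. (\<lambda>w. f (fst w) (snd w)) ((s, q) + t *\<^sub>R (0, axis k 1))) 0
      = frechet_derivative (\<lambda>w. f (fst w) (snd w)) (at ((s, q) + 0 *\<^sub>R (0, axis k 1))) (0, axis k 1)"
    using assms by (intro line_deriv_real) auto
  thus ?thesis unfolding df_dgrad_def by simp
qed

lemma real_deriv_fd:
  fixes g :: "real \<Rightarrow> real"
  assumes "g differentiable (at x)"
  shows "frechet_derivative g (at x) 1 = deriv g x"
proof -
  have "(g has_real_derivative deriv g x) (at x)"
    using assms DERIV_deriv_iff_real_differentiable by blast
  hence "(g has_derivative (\<lambda>h. deriv g x * h)) (at x)"
    by (simp add: has_field_derivative_def)
  thus ?thesis using fdI by fastforce
qed



lemma pair_decomp: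
  "((a, w) :: real \<times> (real^'d::finite)) = a *\<^sub>R (1, 0) + (\<Sum>k\<in>UNIV. (w $ k) *\<^sub>R (0, axis k 1))"
proof -
  have "w = (\<Sum>k\<in>UNIV. (w $ k) *\<^sub>R axis k 1)" using vec_as_sum[of "\<lambda>k. w $ k"] by simp
  moreover have "fst (\<Sum>k\<in>UNIV. (w $ k) *\<^sub>R ((0::real), axis k (1::real))) = 0"
    by (simp add: fst_sum)
  moreover have "snd (\<Sum>k\<in>UNIV. (w $ k) *\<^sub>R ((0::real), axis k (1::real))) = (\<Sum>k\<in>UNIV. (w $ k) *\<^sub>R axis k 1)"
    by (simp add: snd_sum)
  ultimately show ?thesis by (simp add: prod_eq_iff)
qed

lemma fd_F:
  fixes f :: "real \<Rightarrow> real^'d::finite \<Rightarrow> real" and \<phi> :: "'a::real_normed_vector \<Rightarrow> real"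
    and G :: "'a \<Rightarrow> real^'d"
  assumes dF: "\<forall>w. (\<lambda>w. f (fst w) (snd w)) differentiable (at w)"
    and d1: "\<phi> differentiable (at z)" and d2: "G differentiable (at z)"
  shows "frechet_derivative (\<lambda>y. f (\<phi> y) (G y)) (at z) b
    = frechet_derivative \<phi> (at z) b * df_dphi f (\<phi> z) (G z)
      + (\<Sum>k\<in>UNIV. frechet_derivative G (at z) b $ k * df_dgrad f (\<phi> z) (G z) $ k)"
proof -
  define Fp where "Fp = (\<lambda>w::real \<times> (real^'d). f (fst w) (snd w))"
  have dFz: "Fp differentiable (at (\<phi> z, G z))" using dF unfolding Fp_def by blast
  have p: "((\<lambda>y. (\<phi> y, G y)) has_derivative (\<lambda>h. (frechet_derivative \<phi> (at z) h, frechet_derivative G (at z) h))) (at z)"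
    by (intro has_derivative_Pair fdW d1 d2)
  have "((\<lambda>y. Fp (\<phi> y, G y)) has_derivative
      (\<lambda>h. frechet_derivative Fp (at (\<phi> z, G z)) (frechet_derivative \<phi> (at z) h, frechet_derivative G (at z) h))) (at z)"
    using has_derivative_compose[OF p fdW[OF dFz]] by simp
  hence "frechet_derivative (\<lambda>y. f (\<phi> y) (G y)) (at z) b
     = frechet_derivative Fp (at (\<phi> z, G z)) (frechet_derivative \<phi> (at z) b, frechet_derivative G (at z) b)"
    unfolding Fp_def by (simp add: fdI)
  also have "\<dots> = frechet_derivative \<phi> (at z) b * frechet_derivative Fp (at (\<phi> z, G z)) (1, 0)
      + (\<Sum>k\<in>UNIV. frechet_derivative G (at z) b $ k * frechet_derivative Fp (at (\<phi> z, G z)) (0, axis k 1))"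
    using linear_frechet_derivative[OF dFz]
    by (subst pair_decomp[of "frechet_derivative \<phi> (at z) b" "frechet_derivative G (at z) b"])
       (simp only: linear_add linear_sum linear_scale o_def, simp)
  also have "\<dots> = frechet_derivative \<phi> (at z) b * df_dphi f (\<phi> z) (G z)
      + (\<Sum>k\<in>UNIV. frechet_derivative G (at z) b $ k * df_dgrad f (\<phi> z) (G z) $ k)"
    using dphi_F[OF dF] dgrad_F[OF dF] unfolding Fp_def by simp
  finally show ?thesis .
qed

lemma diff_F:
  fixes f :: "real \<Rightarrow> real^'d::finite \<Rightarrow> real" and \<phi> :: "'a::real_normed_vector \<Rightarrow> real"
    and G :: "'a \<Rightarrow> real^'d"
  assumes dF: "\<forall>w. (\<lambda>w. f (fst w) (snd w)) differentiable (at w)"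
    and d1: "\<phi> differentiable (at z)" and d2: "G differentiable (at z)"
  shows "(\<lambda>y. f (\<phi> y) (G y)) differentiable (at z)"
proof -
  have "(\<lambda>y. (\<lambda>w. f (fst w) (snd w)) (\<phi> y, G y)) differentiable (at z)"
    by (rule differentiable_compose[OF _ differentiable_Pair[OF d1 d2]]) (use dF in blast)
  thus ?thesis by simp
qed

lemma diff_xi:
  fixes f :: "real \<Rightarrow> real^'d::finite \<Rightarrow> real" and \<phi> :: "'a::real_normed_vector \<Rightarrow> real"
    and G :: "'a \<Rightarrow> real^'d"
  assumes dF: "\<forall>w. (\<lambda>w. f (fst w) (snd w)) differentiable (at w)"
    and dF1: "\<forall>w. (\<lambda>w'. frechet_derivative (\<lambda>w. f (fst w) (snd w)) (at w') (0, axis k 1)) differentiable (at w)"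
    and d1: "\<phi> differentiable (at z)" and d2: "G differentiable (at z)"
  shows "(\<lambda>y. df_dgrad f (\<phi> y) (G y) $ k) differentiable (at z)"
proof -
  have "(\<lambda>y. (\<lambda>w'. frechet_derivative (\<lambda>w. f (fst w) (snd w)) (at w') (0, axis k 1)) (\<phi> y, G y)) differentiable (at z)"
    by (rule differentiable_compose[OF _ differentiable_Pair[OF d1 d2]]) (use dF1 in blast)
  thus ?thesis using dgrad_F[OF dF] by simp
qed



lemma alg_core:
  fixes u ut g Gt P xi mi pi :: "'d::finite \<Rightarrow> real"
    and V H X Q :: "'d \<Rightarrow> 'd \<Rightarrow> real" and K :: "'d \<Rightarrow> 'd \<Rightarrow> 'd \<Rightarrow> real"
    and r r1 c1 et et1 mm mm1 fz mu pp pt A :: real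
  defines "D \<equiv> \<lambda>i j. (V i j + V j i) / 2"
  assumes sH: "\<And>i j. H i j = H j i"
    and sG: "\<And>i. Gt i = P i"
    and xiA: "\<And>i. xi i = A * g i"
    and sK: "\<And>i j k. K i j k = K j i k"
    and sX: "\<And>i j. X j i * g i + xi j * H i i = X i i * g j + xi i * H j i"
    and inc: "(\<Sum>i\<in>UNIV. V i i) = 0"
    and mom: "\<And>i. r1*pt*u i + r*ut i + (\<Sum>j\<in>UNIV. r1*g j*(u i*u j) + r*(V i j*u j + u i*V j j))
                 - (\<Sum>j\<in>UNIV. 2*et1*g j*D i j + 2*et*K i j j) + pi i
               = - (\<Sum>j\<in>UNIV. H i j * xi j + g i * X j j)"
    and tr: "c1*(pt + (\<Sum>i\<in>UNIV. u i*g i)) = (\<Sum>i\<in>UNIV. mm1*g i*mi i + mm*Q i i)"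
    and ch: "c1*mu = fz - (\<Sum>i\<in>UNIV. X i i) - r1*(\<Sum>k\<in>UNIV. (u k)^2)/2"
  shows "(r1*pt*(\<Sum>k\<in>UNIV. (u k)^2)/2 + r*(\<Sum>k\<in>UNIV. u k*ut k) + fz*pt + (\<Sum>k\<in>UNIV. xi k*Gt k))
     + (\<Sum>i\<in>UNIV. u i*(r1*g i*(\<Sum>k\<in>UNIV. (u k)^2)/2 + r*(\<Sum>k\<in>UNIV. u k*V k i) + fz*g i + (\<Sum>k\<in>UNIV. xi k*H k i)))
     - ((\<Sum>i\<in>UNIV. \<Sum>j\<in>UNIV. 2*et1*g i*D i j*u j + 2*et*K i j i*u j + 2*et*D i j*V j i)
        - (\<Sum>i\<in>UNIV. H i i*(\<Sum>j\<in>UNIV. xi j*u j) + g i*(\<Sum>j\<in>UNIV. X j i*u j + xi j*V j i))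
        - (\<Sum>i\<in>UNIV. pi i*u i + pp*V i i))
     - (\<Sum>i\<in>UNIV. (P i + (\<Sum>k\<in>UNIV. V k i*g k + u k*H k i))*xi i + (pt + (\<Sum>k\<in>UNIV. u k*g k))*X i i)
     + (- (\<Sum>i\<in>UNIV. mi i*mm*mi i + mu*(mm1*g i*mi i + mm*Q i i)))
   = - (2*et*(\<Sum>i\<in>UNIV. \<Sum>j\<in>UNIV. (D i j)^2) + mm*(\<Sum>i\<in>UNIV. (mi i)^2))"
proof -
  define nv where "nv = (\<Sum>k\<in>UNIV. (u k)^2)"
  define ug where "ug = (\<Sum>k\<in>UNIV. u k*g k)"
  define ux where "ux = (\<Sum>k\<in>UNIV. xi k*u k)"
  define TX where "TX = (\<Sum>k\<in>UNIV. X k k)"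
  define TH where "TH = (\<Sum>k\<in>UNIV. H k k)"
  define dv where "dv = (\<Sum>k\<in>UNIV. V k k)"
  define A5 where "A5 = (\<Sum>i\<in>UNIV. \<Sum>j\<in>UNIV. u i*V i j*u j)"
  define A6 where "A6 = (\<Sum>i\<in>UNIV. \<Sum>j\<in>UNIV. u i*H i j*xi j)"
  define B1 where "B1 = (\<Sum>i\<in>UNIV. \<Sum>j\<in>UNIV. g i*D i j*u j)"
  define B2 where "B2 = (\<Sum>i\<in>UNIV. \<Sum>j\<in>UNIV. K i j i*u j)"
  define B3 where "B3 = (\<Sum>i\<in>UNIV. \<Sum>j\<in>UNIV. (D i j)^2)"
  define C1 where "C1 = (\<Sum>i\<in>UNIV. \<Sum>j\<in>UNIV. g i*X j i*u j)"
  define C2 where "C2 = (\<Sum>i\<in>UNIV. \<Sum>j\<in>UNIV. g i*xi j*V j i)"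
  define C4 where "C4 = (\<Sum>i\<in>UNIV. \<Sum>j\<in>UNIV. u j*H j i*xi i)"
  define SP where "SP = (\<Sum>k\<in>UNIV. xi k*P k)"
  define Svvt where "Svvt = (\<Sum>k\<in>UNIV. u k*ut k)"
  define Spv where "Spv = (\<Sum>k\<in>UNIV. pi k*u k)"
  define Smm where "Smm = (\<Sum>k\<in>UNIV. (mi k)^2)"
  define trR where "trR = (\<Sum>i\<in>UNIV. mm1*g i*mi i + mm*Q i i)"
  have L5: "(\<Sum>i\<in>UNIV. u i*(r1*g i*nv/2 + r*(\<Sum>k\<in>UNIV. u k*V k i) + fz*g i + (\<Sum>k\<in>UNIV. xi k*H k i)))
      = r1*ug*nv/2 + r*A5 + fz*ug + A6"
  proof -
    have "(\<Sum>i\<in>UNIV. u i*(\<Sum>k\<in>UNIV. u k*V k i)) = A5"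
      unfolding A5_def sum_distrib_left by (subst sum.swap) (simp add: algebra_simps)
    moreover have "(\<Sum>i\<in>UNIV. u i*(\<Sum>k\<in>UNIV. xi k*H k i)) = A6"
      unfolding A6_def sum_distrib_left using sH by (simp add: algebra_simps)
    ultimately show ?thesis
      by (simp add: sum.distrib ug_def sum_distrib_left[symmetric] sum_divide_distrib[symmetric] algebra_simps del: sum_distrib_left)
  qed
  have L6: "(\<Sum>i\<in>UNIV. \<Sum>j\<in>UNIV. 2*et1*g i*D i j*u j + 2*et*K i j i*u j + 2*et*D i j*V j i)
      = 2*et1*B1 + 2*et*B2 + 2*et*B3"
  proof -
    have "(\<Sum>i\<in>UNIV. \<Sum>j\<in>UNIV. D i j*V j i) = B3"
    proof -
      have "(\<Sum>i\<in>UNIV. \<Sum>j\<in>UNIV. D i j*V j i) = (\<Sum>i\<in>UNIV. \<Sum>j\<in>UNIV. D j i*V i j)"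
        by (subst sum.swap) simp
      hence "2*(\<Sum>i\<in>UNIV. \<Sum>j\<in>UNIV. D i j*V j i) = (\<Sum>i\<in>UNIV. \<Sum>j\<in>UNIV. D i j*V j i) + (\<Sum>i\<in>UNIV. \<Sum>j\<in>UNIV. D j i*V i j)"
        by simp
      also have "\<dots> = (\<Sum>i\<in>UNIV. \<Sum>j\<in>UNIV. 2*(D i j)^2)"
        by (simp add: sum.distrib[symmetric] D_def power2_eq_square field_simps)
      finally show ?thesis unfolding B3_def by (simp add: sum_distrib_left[symmetric])
    qed
    hence b3: "(\<Sum>i\<in>UNIV. \<Sum>j\<in>UNIV. D i j*V j i) = B3" .
    have "(\<Sum>i\<in>UNIV. \<Sum>j\<in>UNIV. 2*et1*g i*D i j*u j + 2*et*K i j i*u j + 2*et*D i j*V j i)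
       = (\<Sum>i\<in>UNIV. \<Sum>j\<in>UNIV. (2*et1)*(g i*D i j*u j) + (2*et)*(K i j i*u j) + (2*et)*(D i j*V j i))"
      by (simp add: algebra_simps)
    also have "\<dots> = 2*et1*B1 + 2*et*B2 + 2*et*B3"
      unfolding B1_def B2_def b3[symmetric]
      by (simp only: sum.distrib sum_distrib_left[symmetric])
    finally show ?thesis .
  qed
  have L7: "(\<Sum>i\<in>UNIV. H i i*(\<Sum>j\<in>UNIV. xi j*u j) + g i*(\<Sum>j\<in>UNIV. X j i*u j + xi j*V j i))
      = TH*ux + C1 + C2"
    unfolding TH_def ux_def C1_def C2_def
    by (simp add: sum.distrib sum_distrib_left sum_distrib_right algebra_simps) (rule sum.swap)
  have L8: "(\<Sum>i\<in>UNIV. pi i*u i + pp*V i i) = Spv + pp*dv"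
    unfolding Spv_def dv_def by (simp add: sum.distrib sum_distrib_left)
  have L9: "(\<Sum>i\<in>UNIV. (P i + (\<Sum>k\<in>UNIV. V k i*g k + u k*H k i))*xi i + (pt + (\<Sum>k\<in>UNIV. u k*g k))*X i i)
      = SP + C2 + C4 + (pt + ug)*TX"
  proof -
    have a: "(\<Sum>i\<in>UNIV. (\<Sum>k\<in>UNIV. V k i*g k)*xi i) = C2"
    proof -
      have "(\<Sum>i\<in>UNIV. (\<Sum>k\<in>UNIV. V k i*g k)*xi i) = (\<Sum>i\<in>UNIV. \<Sum>k\<in>UNIV. V k i*(A*g k*g i))"
        by (simp add: sum_distrib_right sum_distrib_left xiA algebra_simps)
      also have "\<dots> = C2" unfolding C2_def by (simp add: xiA algebra_simps)
      finally show ?thesis .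
    qed
    have b: "(\<Sum>i\<in>UNIV. (\<Sum>k\<in>UNIV. u k*H k i)*xi i) = C4"
      unfolding C4_def by (simp add: sum_distrib_right sum_distrib_left algebra_simps)
    show ?thesis using a b unfolding SP_def ug_def TX_def
      by (simp add: sum.distrib sum_distrib_left sum_distrib_right algebra_simps) (rule sum.swap)
  qed
  have L10: "(\<Sum>i\<in>UNIV. mi i*mm*mi i + mu*(mm1*g i*mi i + mm*Q i i)) = mm*Smm + mu*trR"
    unfolding Smm_def trR_def by (simp add: sum.distrib sum_distrib_left power2_eq_square algebra_simps)
  have M: "r1*pt*nv + r*Svvt + r1*ug*nv + r*A5 + r*nv*dv - 2*et1*B1 - 2*et*B2 + Spv
      = -(A6 + ug*TX)"
  proof -
    have "(\<Sum>i\<in>UNIV. u i * (r1*pt*u i + r*ut i + (\<Sum>j\<in>UNIV. r1*g j*(u i*u j) + r*(V i j*u j + u i*V j j))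
                 - (\<Sum>j\<in>UNIV. 2*et1*g j*D i j + 2*et*K i j j) + pi i))
        = (\<Sum>i\<in>UNIV. u i * (- (\<Sum>j\<in>UNIV. H i j * xi j + g i * X j j)))"
      using mom by simp
    moreover have "(\<Sum>i\<in>UNIV. u i * (r1*pt*u i + r*ut i + (\<Sum>j\<in>UNIV. r1*g j*(u i*u j) + r*(V i j*u j + u i*V j j))
                 - (\<Sum>j\<in>UNIV. 2*et1*g j*D i j + 2*et*K i j j) + pi i))
        = r1*pt*nv + r*Svvt + r1*ug*nv + r*A5 + r*nv*dv - 2*et1*B1 - 2*et*B2 + Spv"
    proof -
      have per: "u i * (r1*pt*u i + r*ut i + (\<Sum>j\<in>UNIV. r1*g j*(u i*u j) + r*(V i j*u j + u i*V j j))
                 - (\<Sum>j\<in>UNIV. 2*et1*g j*D i j + 2*et*K i j j) + pi i)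
        = r1*pt*(u i*u i) + r*(u i*ut i) + r1*(\<Sum>j\<in>UNIV. u i*(g j*(u i*u j))) + r*(\<Sum>j\<in>UNIV. u i*(V i j*u j))
          + r*(\<Sum>j\<in>UNIV. u i*(u i*V j j)) - 2*et1*(\<Sum>j\<in>UNIV. u i*(g j*D i j)) - 2*et*(\<Sum>j\<in>UNIV. u i*K i j j) + pi i*u i" for i
        by (simp add: sum.distrib sum_subtractf sum_distrib_left algebra_simps)
      have e1: "(\<Sum>i\<in>UNIV. u i*(\<Sum>j\<in>UNIV. g j*D i j)) = B1"
        unfolding B1_def D_def sum_distrib_left by (subst sum.swap) (simp add: algebra_simps)
      have e2: "(\<Sum>i\<in>UNIV. u i*(\<Sum>j\<in>UNIV. K i j j)) = B2"
        unfolding B2_def sum_distrib_left by (subst sum.swap) (simp add: sK algebra_simps)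
      have e3: "(\<Sum>i\<in>UNIV. u i*(\<Sum>j\<in>UNIV. g j*(u i*u j))) = ug*nv"
        unfolding ug_def nv_def by (simp add: sum_distrib_left sum_distrib_right power2_eq_square algebra_simps)
      have e4: "(\<Sum>i\<in>UNIV. u i*(u i*(\<Sum>j\<in>UNIV. V j j))) = nv*dv"
        unfolding dv_def nv_def by (simp add: sum_distrib_left sum_distrib_right power2_eq_square algebra_simps)
      have e5: "(\<Sum>i\<in>UNIV. u i*(\<Sum>j\<in>UNIV. V i j*u j)) = A5"
        unfolding A5_def by (simp add: sum_distrib_left algebra_simps)
      have e6: "(\<Sum>i\<in>UNIV. u i*u i) = nv" unfolding nv_def by (simp add: power2_eq_square)
      have e7: "(\<Sum>i\<in>UNIV. pi i*u i) = Spv" unfolding Spv_def ..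
      have e8: "(\<Sum>i\<in>UNIV. u i*ut i) = Svvt" unfolding Svvt_def ..
      show ?thesis
        unfolding per
        by (simp only: sum.distrib sum_subtractf sum_distrib_left[symmetric]) (simp only: e1 e2 e3 e4 e5 e6 e7 e8)
    qed
    moreover have "(\<Sum>i\<in>UNIV. u i * (- (\<Sum>j\<in>UNIV. H i j * xi j + g i * X j j))) = -(A6 + ug*TX)"
      unfolding A6_def ug_def TX_def
      by (simp add: sum.distrib sum_distrib_left sum_distrib_right sum_negf sum_subtractf algebra_simps)
    ultimately show ?thesis by simp
  qed
  have SGP: "(\<Sum>k\<in>UNIV. xi k*Gt k) = SP" unfolding SP_def by (simp add: sG)
  have XR: "C1 + TH*ux = ug*TX + C4"
  proof -
    have "(\<Sum>i\<in>UNIV. \<Sum>j\<in>UNIV. u j*(X j i * g i + xi j * H i i)) = (\<Sum>i\<in>UNIV. \<Sum>j\<in>UNIV. u j*(X i i * g j + xi i * H j i))"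
      using sX by simp
    moreover have "(\<Sum>i\<in>UNIV. \<Sum>j\<in>UNIV. u j*(X j i * g i + xi j * H i i)) = C1 + TH*ux"
      unfolding C1_def TH_def ux_def
      by (simp add: sum.distrib sum_distrib_left sum_distrib_right algebra_simps) (rule sum.swap)
    moreover have "(\<Sum>i\<in>UNIV. \<Sum>j\<in>UNIV. u j*(X i i * g j + xi i * H j i)) = ug*TX + C4"
      unfolding C4_def ug_def TX_def
      by (simp add: sum.distrib sum_distrib_left sum_distrib_right algebra_simps) (rule sum.swap)
    ultimately show ?thesis by simp
  qed
  have dv0: "dv = 0" using inc dv_def by simp
  have tr': "c1*(pt + ug) = trR" using tr unfolding ug_def trR_def .
  have ch': "c1*mu = fz - TX - r1*nv/2" using ch unfolding TX_def nv_def .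
  have goal: "r1*pt*nv/2 + r*Svvt + fz*pt + SP + (r1*ug*nv/2 + r*A5 + fz*ug + A6)
     - ((2*et1*B1 + 2*et*B2 + 2*et*B3) - (TH*ux + C1 + C2) - (Spv + pp*dv))
     - (SP + C2 + C4 + (pt + ug)*TX) + (- (mm*Smm + mu*trR))
     = - (2*et*B3 + mm*Smm)"
  proof -
    have "mu*trR = (pt+ug)*(c1*mu)" unfolding tr'[symmetric] by (simp add: algebra_simps)
    also have "\<dots> = (pt+ug)*(fz - TX - r1*nv/2)" using ch' by simp
    finally have mt: "mu*trR = (pt+ug)*(fz - TX - r1*nv/2)" .
    have rS: "r*Svvt = -(A6 + ug*TX) - (r1*pt*nv + r1*ug*nv + r*A5 + r*nv*dv - 2*et1*B1 - 2*et*B2 + Spv)"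
      using M by (simp add: algebra_simps)
    show ?thesis using XR dv0 unfolding mt rS by (simp add: algebra_simps)
  qed
  show ?thesis
    using goal L5[unfolded nv_def] L6 L7 L8 L9 L10 SGP
    unfolding nv_def Svvt_def B3_def Smm_def
    by (simp add: power2_eq_square)
qed

theorem mainTheorem4:
  fixes \<Omega> :: "(real^'d::finite) set" and T :: real
    and v :: "(real^'d) \<times> real \<Rightarrow> real^'d"
    and p \<phi> \<mu> :: "(real^'d) \<times> real \<Rightarrow> real"
    and rho rhoc eta m :: "real \<Rightarrow> real"
    and f a :: "real \<Rightarrow> real^'d \<Rightarrow> real"
  defines "S \<equiv> \<Omega> \<times> {0<..<T}"
  assumes "open \<Omega>"
    and "smooth_on S v" and "smooth_on S p" and "smooth_on S \<phi>" and "smooth_on S \<mu>"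
    and "smooth_on UNIV rho" and "smooth_on UNIV rhoc"
    and "smooth_on UNIV eta" and "smooth_on UNIV m"
    and "smooth_on UNIV (\<lambda>(z, q). f z q)"
    and "\<forall>s. eta s \<ge> 0" and "\<forall>s. m s \<ge> 0"
    and a_rel: "\<forall>z\<in>S. df_dgrad f (\<phi> z) (grad \<phi> z) = a (\<phi> z) (grad \<phi> z) *\<^sub>R grad \<phi> z"
    and momentum: "\<forall>z\<in>S.
        dt (\<lambda>y. rho (\<phi> y) *\<^sub>R v y) z
      + divm (\<lambda>y. rho (\<phi> y) *\<^sub>R outer (v y) (v y)) z
      - divm (\<lambda>y. (2 * eta (\<phi> y)) *\<^sub>R symgrad v y) z
      + grad p z
      = - divm (\<lambda>y. a (\<phi> y) (grad \<phi> y) *\<^sub>R outer (grad \<phi> y) (grad \<phi> y)) z"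
    and incompr: "\<forall>z\<in>S. divg v z = 0"
    and transport: "\<forall>z\<in>S.
        dt (\<lambda>y. rhoc (\<phi> y)) z + v z \<bullet> grad (\<lambda>y. rhoc (\<phi> y)) z
      = divg (\<lambda>y. m (\<phi> y) *\<^sub>R grad \<mu> y) z"
    and chem: "\<forall>z\<in>S.
        deriv rhoc (\<phi> z) * \<mu> z
      = df_dphi f (\<phi> z) (grad \<phi> z)
      - divg (\<lambda>y. a (\<phi> y) (grad \<phi> y) *\<^sub>R grad \<phi> y) z
      - deriv rho (\<phi> z) * (norm (v z))\<^sup>2 / 2"
  shows "\<forall>z\<in>S.
     (let e = (\<lambda>y. rho (\<phi> y) * (norm (v y))\<^sup>2 / 2 + f (\<phi> y) (grad \<phi> y));
          J = (\<lambda>y. - (m (\<phi> y) *\<^sub>R grad \<mu> y));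
          \<xi> = (\<lambda>y. df_dgrad f (\<phi> y) (grad \<phi> y));
          phidot = (\<lambda>y. dt \<phi> y + v y \<bullet> grad \<phi> y);
          Tm = (\<lambda>y. (2 * eta (\<phi> y)) *\<^sub>R symgrad v y - outer (grad \<phi> y) (\<xi> y) - p y *\<^sub>R mat 1);
          lhs = dt e z + v z \<bullet> grad e z - divg (\<lambda>y. Tm y *v v y) z
                - divg (\<lambda>y. phidot y *\<^sub>R \<xi> y) z + divg (\<lambda>y. \<mu> y *\<^sub>R J y) z
      in lhs = - (2 * eta (\<phi> z) * frob2 (symgrad v z) + m (\<phi> z) * (norm (grad \<mu> z))\<^sup>2)
         \<and> lhs \<le> 0)"
proof -
  have oS: "open S" unfolding S_def using \<open>open \<Omega>\<close> by (intro open_Times) auto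
  have fF: "(\<lambda>(z, q). f z q) = (\<lambda>w. f (fst w) (snd w))" by (simp add: fun_eq_iff split_beta)
  have smF: "smooth_on UNIV (\<lambda>w. f (fst w) (snd w))" using \<open>smooth_on UNIV (\<lambda>(z, q). f z q)\<close> by (simp only: fF)
  have dF: "\<forall>w. (\<lambda>w. f (fst w) (snd w)) differentiable (at w)" by (intro allI smooth_D0[OF smF]) simp
  have dF1: "\<forall>w. (\<lambda>w'. frechet_derivative (\<lambda>w. f (fst w) (snd w)) (at w') (0, axis k 1)) differentiable (at w)" for k
    by (intro allI smooth_D1[OF smF basis_q]) simp
  have drho: "\<And>x. rho differentiable (at x)" by (rule smooth_D0[OF \<open>smooth_on UNIV rho\<close>]) simp
  have drhoc: "\<And>x. rhoc differentiable (at x)" by (rule smooth_D0[OF \<open>smooth_on UNIV rhoc\<close>]) simp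
  have deta: "\<And>x. eta differentiable (at x)" by (rule smooth_D0[OF \<open>smooth_on UNIV eta\<close>]) simp
  have dm: "\<And>x. m differentiable (at x)" by (rule smooth_D0[OF \<open>smooth_on UNIV m\<close>]) simp
  have smphi: "smooth_on S \<phi>" and smv: "smooth_on S v" and smmu: "smooth_on S \<mu>" and smp: "smooth_on S p"
    using assms by blast+
  have gradc: "\<And>u y i. grad u y $ i = frechet_derivative u (at y) (axis i 1, 0)"
    by (simp add: grad_def dx_def)
  show ?thesis (is "\<forall>z\<in>S. ?Q z")
  proof
    fix z assume zS: "z \<in> S"
    have Dphi: "\<phi> differentiable (at z)" using smooth_D0[OF smphi zS] .
    have Dv: "v differentiable (at z)" using smooth_D0[OF smv zS] .
    have Dmu: "\<mu> differentiable (at z)" using smooth_D0[OF smmu zS] .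
    have Dp: "p differentiable (at z)" using smooth_D0[OF smp zS] .
    have Dphix: "\<And>i. (\<lambda>y. frechet_derivative \<phi> (at y) (axis i 1, 0)) differentiable (at z)"
      using smooth_D1[OF smphi basis_x zS] .
    have Dphit: "(\<lambda>y. frechet_derivative \<phi> (at y) (0, 1)) differentiable (at z)"
      using smooth_D1[OF smphi basis_t zS] .
    have Dmux: "\<And>i. (\<lambda>y. frechet_derivative \<mu> (at y) (axis i 1, 0)) differentiable (at z)"
      using smooth_D1[OF smmu basis_x zS] .
    have Dgrad: "(\<lambda>y. grad \<phi> y) differentiable (at z)"
    proof -
      have "(\<lambda>y. \<Sum>i\<in>UNIV. frechet_derivative \<phi> (at y) (axis i 1, 0) *\<^sub>R axis i (1::real)) differentiable (at z)"
        using Dphix by (intro differentiable_sum differentiable_scaleR) auto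
      moreover have "(\<lambda>y. grad \<phi> y) = (\<lambda>y. \<Sum>i\<in>UNIV. frechet_derivative \<phi> (at y) (axis i 1, 0) *\<^sub>R axis i (1::real))"
        unfolding grad_def dx_def by (intro ext) (rule vec_as_sum)
      ultimately show ?thesis by simp
    qed
    have Dxi: "\<And>k. (\<lambda>y. df_dgrad f (\<phi> y) (grad \<phi> y) $ k) differentiable (at z)"
      using diff_xi[OF dF dF1 Dphi Dgrad] .
    have DF: "(\<lambda>y. f (\<phi> y) (grad \<phi> y)) differentiable (at z)"
      using diff_F[OF dF Dphi Dgrad] .
    have Drho: "(\<lambda>y. rho (\<phi> y)) differentiable (at z)" using diff_comp1[OF drho Dphi] .
    have Drhoc: "(\<lambda>y. rhoc (\<phi> y)) differentiable (at z)" using diff_comp1[OF drhoc Dphi] .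
    have Deta: "(\<lambda>y. eta (\<phi> y)) differentiable (at z)" using diff_comp1[OF deta Dphi] .
    have Dm: "(\<lambda>y. m (\<phi> y)) differentiable (at z)" using diff_comp1[OF dm Dphi] .
    obtain d0 where d0: "d0 > 0" "ball z d0 \<subseteq> S" using oS zS open_contains_ball by blast
    have sgS: "\<And>i j y. y \<in> S \<Longrightarrow> symgrad v y $ i $ j
        = (frechet_derivative v (at y) (axis j 1, 0) $ i + frechet_derivative v (at y) (axis i 1, 0) $ j) / 2"
      unfolding symgrad_def dx_def using smooth_D0[OF smv] by (simp add: fd_nth)
    have Dsg: "\<And>i j. (\<lambda>y. symgrad v y $ i $ j) differentiable (at z)"
    proof -
      fix i j
      have "(\<lambda>y. (frechet_derivative v (at y) (axis j 1, 0) $ i + frechet_derivative v (at y) (axis i 1, 0) $ j) / 2) differentiable (at z)"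
        using smooth_D1[OF smv basis_x zS] by (intro differentiable_divide differentiable_add diff_nth) auto
      thus "(\<lambda>y. symgrad v y $ i $ j) differentiable (at z)"
        by (rule diff_local[OF oS zS, rotated]) (simp add: sgS)
    qed
    have fr_rho: "\<And>b. frechet_derivative (\<lambda>y. rho (\<phi> y)) (at z) b = deriv rho (\<phi> z) * frechet_derivative \<phi> (at z) b"
      using fd_comp1[OF drho Dphi] .
    have fr_rhoc: "\<And>b. frechet_derivative (\<lambda>y. rhoc (\<phi> y)) (at z) b = deriv rhoc (\<phi> z) * frechet_derivative \<phi> (at z) b"
      using fd_comp1[OF drhoc Dphi] .
    have fr_eta: "\<And>b. frechet_derivative (\<lambda>y. eta (\<phi> y)) (at z) b = deriv eta (\<phi> z) * frechet_derivative \<phi> (at z) b"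
      using fd_comp1[OF deta Dphi] .
    have fr_m: "\<And>b. frechet_derivative (\<lambda>y. m (\<phi> y)) (at z) b = deriv m (\<phi> z) * frechet_derivative \<phi> (at z) b"
      using fd_comp1[OF dm Dphi] .
    have fr_F: "\<And>b. frechet_derivative (\<lambda>y. f (\<phi> y) (grad \<phi> y)) (at z) b
        = frechet_derivative \<phi> (at z) b * df_dphi f (\<phi> z) (grad \<phi> z)
          + (\<Sum>k\<in>UNIV. frechet_derivative (\<lambda>y. frechet_derivative \<phi> (at y) (axis k 1, 0)) (at z) b * df_dgrad f (\<phi> z) (grad \<phi> z) $ k)"
    proof -
      fix b
      have "frechet_derivative (\<lambda>y. grad \<phi> y) (at z) b $ k = frechet_derivative (\<lambda>y. frechet_derivative \<phi> (at y) (axis k 1, 0)) (at z) b" for k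
        using fd_nth[OF Dgrad, of k b] by (simp add: gradc)
      thus "?thesis b" using fd_F[OF dF Dphi Dgrad, of b] by simp
    qed
    define u where "u = (\<lambda>k. v z $ k)"
    define ut where "ut = (\<lambda>k. frechet_derivative v (at z) (0, 1) $ k)"
    define g where "g = (\<lambda>k. frechet_derivative \<phi> (at z) (axis k 1, 0))"
    define pt where "pt = frechet_derivative \<phi> (at z) (0, 1)"
    define Gt where "Gt = (\<lambda>k. frechet_derivative (\<lambda>y. frechet_derivative \<phi> (at y) (axis k 1, 0)) (at z) (0, 1))"
    define P where "P = (\<lambda>k. frechet_derivative (\<lambda>y. frechet_derivative \<phi> (at y) (0, 1)) (at z) (axis k 1, 0))"
    define H where "H = (\<lambda>i j. frechet_derivative (\<lambda>y. frechet_derivative \<phi> (at y) (axis i 1, 0)) (at z) (axis j 1, 0))"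
    define V where "V = (\<lambda>i j. frechet_derivative v (at z) (axis j 1, 0) $ i)"
    define xi where "xi = (\<lambda>k. df_dgrad f (\<phi> z) (grad \<phi> z) $ k)"
    define X where "X = (\<lambda>i j. frechet_derivative (\<lambda>y. df_dgrad f (\<phi> y) (grad \<phi> y) $ i) (at z) (axis j 1, 0))"
    define mi where "mi = (\<lambda>k. frechet_derivative \<mu> (at z) (axis k 1, 0))"
    define Q where "Q = (\<lambda>i j. frechet_derivative (\<lambda>y. frechet_derivative \<mu> (at y) (axis i 1, 0)) (at z) (axis j 1, 0))"
    define pk where "pk = (\<lambda>k. frechet_derivative p (at z) (axis k 1, 0))"
    define K where "K = (\<lambda>i j k. frechet_derivative (\<lambda>y. symgrad v y $ i $ j) (at z) (axis k 1, 0))"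
    define r where "r = rho (\<phi> z)"
    define r1 where "r1 = deriv rho (\<phi> z)"
    define c1 where "c1 = deriv rhoc (\<phi> z)"
    define et where "et = eta (\<phi> z)"
    define et1 where "et1 = deriv eta (\<phi> z)"
    define mm where "mm = m (\<phi> z)"
    define mm1 where "mm1 = deriv m (\<phi> z)"
    define fz where "fz = df_dphi f (\<phi> z) (grad \<phi> z)"
    define mu where "mu = \<mu> z"
    define pp where "pp = p z"
    define A where "A = a (\<phi> z) (grad \<phi> z)"
    define D where "D = (\<lambda>i j. (V i j + V j i) / 2)"
    note FD = fd_add fd_diff fd_minus fd_mult fd_scaleR fd_sum fd_nth diff_nth
      fr_rho fr_rhoc fr_eta fr_m fr_F
      Dphi Dv Dmu Dp Dphix Dphit Dmux Dgrad Dxi DF Drho Drhoc Deta Dm Dsg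
    have sgz: "\<And>i j. symgrad v z $ i $ j = D i j"
      using sgS[OF zS] unfolding D_def V_def by simp
    have m1: "\<And>i. dt (\<lambda>y. rho (\<phi> y) *\<^sub>R v y) z $ i = r1*pt*u i + r*ut i"
      unfolding dt_def u_def ut_def pt_def r_def r1_def by (simp add: FD algebra_simps)
    have m2: "\<And>i. divm (\<lambda>y. rho (\<phi> y) *\<^sub>R outer (v y) (v y)) z $ i
       = (\<Sum>j\<in>UNIV. r1*g j*(u i*u j) + r*(V i j*u j + u i*V j j))"
      unfolding divm_def dx_def u_def g_def V_def r_def r1_def outer_def
      by (simp add: FD algebra_simps)
    have m3: "\<And>i. divm (\<lambda>y. (2 * eta (\<phi> y)) *\<^sub>R symgrad v y) z $ i
       = (\<Sum>j\<in>UNIV. 2*et1*g j*D i j + 2*et*K i j j)"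
      unfolding divm_def dx_def g_def et_def et1_def K_def
      by (simp add: FD sgz algebra_simps)
    have m4: "\<And>i. grad p z $ i = pk i" unfolding pk_def by (simp add: gradc)
    have m5: "\<And>i. divm (\<lambda>y. a (\<phi> y) (grad \<phi> y) *\<^sub>R outer (grad \<phi> y) (grad \<phi> y)) z $ i
       = (\<Sum>j\<in>UNIV. H i j * xi j + g i * X j j)"
    proof -
      fix i
      have loc: "\<And>j. frechet_derivative (\<lambda>y. (a (\<phi> y) (grad \<phi> y) *\<^sub>R outer (grad \<phi> y) (grad \<phi> y)) $ i $ j) (at z)
          = frechet_derivative (\<lambda>y. frechet_derivative \<phi> (at y) (axis i 1, 0) * df_dgrad f (\<phi> y) (grad \<phi> y) $ j) (at z)"
        by (rule fd_local[OF oS zS]) (use a_rel in \<open>simp add: outer_def gradc\<close>)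
      show "?thesis i"
        unfolding H_def xi_def g_def X_def
        by (simp only: divm_def dx_def vec_lambda_beta loc) (simp add: FD algebra_simps)
    qed
    have mom: "\<And>i. r1*pt*u i + r*ut i + (\<Sum>j\<in>UNIV. r1*g j*(u i*u j) + r*(V i j*u j + u i*V j j))
                 - (\<Sum>j\<in>UNIV. 2*et1*g j*D i j + 2*et*K i j j) + pk i
               = - (\<Sum>j\<in>UNIV. H i j * xi j + g i * X j j)"
    proof -
      fix i
      have "(dt (\<lambda>y. rho (\<phi> y) *\<^sub>R v y) z
      + divm (\<lambda>y. rho (\<phi> y) *\<^sub>R outer (v y) (v y)) z
      - divm (\<lambda>y. (2 * eta (\<phi> y)) *\<^sub>R symgrad v y) z
      + grad p z) $ i
      = (- divm (\<lambda>y. a (\<phi> y) (grad \<phi> y) *\<^sub>R outer (grad \<phi> y) (grad \<phi> y)) z) $ i"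
        using momentum zS by simp
      thus "?thesis i" by (simp only: vector_add_component vector_minus_component vector_uminus_component m1 m2 m3 m4 m5)
    qed
    have inc: "(\<Sum>i\<in>UNIV. V i i) = 0"
    proof -
      have "divg v z = 0" using incompr zS by blast
      thus ?thesis unfolding divg_def dx_def V_def by (simp add: FD)
    qed
    have tr: "c1*(pt + (\<Sum>i\<in>UNIV. u i*g i)) = (\<Sum>i\<in>UNIV. mm1*g i*mi i + mm*Q i i)"
    proof -
      have "dt (\<lambda>y. rhoc (\<phi> y)) z + v z \<bullet> grad (\<lambda>y. rhoc (\<phi> y)) z
          = divg (\<lambda>y. m (\<phi> y) *\<^sub>R grad \<mu> y) z" using transport zS by blast
      moreover have "dt (\<lambda>y. rhoc (\<phi> y)) z + v z \<bullet> grad (\<lambda>y. rhoc (\<phi> y)) z = c1*(pt + (\<Sum>i\<in>UNIV. u i*g i))"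
        unfolding dt_def c1_def pt_def u_def g_def
        by (simp add: FD gradc inner_vec_def sum_distrib_left algebra_simps)
      moreover have "divg (\<lambda>y. m (\<phi> y) *\<^sub>R grad \<mu> y) z = (\<Sum>i\<in>UNIV. mm1*g i*mi i + mm*Q i i)"
        unfolding divg_def dx_def mm_def mm1_def g_def mi_def Q_def
        by (simp add: FD gradc algebra_simps)
      ultimately show ?thesis by simp
    qed
    have nsq: "\<And>x::real^'d. (norm x)^2 = (\<Sum>k\<in>UNIV. (x $ k)^2)"
      unfolding power2_norm_eq_inner inner_vec_def by (simp add: power2_eq_square)
    have ch: "c1*mu = fz - (\<Sum>i\<in>UNIV. X i i) - r1*(\<Sum>k\<in>UNIV. (u k)^2)/2"
    proof -
      have loc: "\<And>i. frechet_derivative (\<lambda>y. (a (\<phi> y) (grad \<phi> y) *\<^sub>R grad \<phi> y) $ i) (at z)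
          = frechet_derivative (\<lambda>y. df_dgrad f (\<phi> y) (grad \<phi> y) $ i) (at z)"
        by (rule fd_local[OF oS zS]) (use a_rel in simp)
      have "divg (\<lambda>y. a (\<phi> y) (grad \<phi> y) *\<^sub>R grad \<phi> y) z = (\<Sum>i\<in>UNIV. X i i)"
        unfolding divg_def dx_def loc X_def ..
      thus ?thesis using chem zS unfolding c1_def mu_def fz_def r1_def u_def by (simp add: nsq)
    qed
    have sH: "\<And>i j. H i j = H j i"
      unfolding H_def
      by (rule schwarz[OF oS zS])
         (auto intro!: smooth_D0[OF smphi] smooth_D1[OF smphi basis_x] differentiable_imp_continuous_on
               simp: differentiable_on_eq_differentiable_at[OF oS] smooth_D2[OF smphi basis_x basis_x])
    have sG: "\<And>i. Gt i = P i"
      unfolding Gt_def P_def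
      by (rule schwarz[OF oS zS])
         (auto intro!: smooth_D0[OF smphi] smooth_D1[OF smphi basis_x] smooth_D1[OF smphi basis_t] differentiable_imp_continuous_on
               simp: differentiable_on_eq_differentiable_at[OF oS] smooth_D2[OF smphi basis_x basis_t] smooth_D2[OF smphi basis_t basis_x])
    have xiA: "\<And>i. xi i = A * g i"
      using a_rel zS unfolding xi_def A_def g_def by (simp add: gradc)
    have sK: "\<And>i j k. K i j k = K j i k"
    proof -
      have "(\<lambda>y. symgrad v y $ i $ j) = (\<lambda>y. symgrad v y $ j $ i)" for i j
        by (simp add: symgrad_def add.commute)
      thus "\<And>i j k. K i j k = K j i k" unfolding K_def by metis
    qed
    have sX: "\<And>i j. X j i * g i + xi j * H i i = X i i * g j + xi i * H j i"
    proof -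
      fix i j
      have "frechet_derivative (\<lambda>y. df_dgrad f (\<phi> y) (grad \<phi> y) $ j * frechet_derivative \<phi> (at y) (axis i 1, 0)) (at z)
          = frechet_derivative (\<lambda>y. df_dgrad f (\<phi> y) (grad \<phi> y) $ i * frechet_derivative \<phi> (at y) (axis j 1, 0)) (at z)"
        by (rule fd_local[OF oS zS]) (use a_rel in \<open>simp add: gradc\<close>)
      hence "frechet_derivative (\<lambda>y. df_dgrad f (\<phi> y) (grad \<phi> y) $ j * frechet_derivative \<phi> (at y) (axis i 1, 0)) (at z) (axis i 1, 0)
          = frechet_derivative (\<lambda>y. df_dgrad f (\<phi> y) (grad \<phi> y) $ i * frechet_derivative \<phi> (at y) (axis j 1, 0)) (at z) (axis i 1, 0)"
        by simp
      thus "X j i * g i + xi j * H i i = X i i * g j + xi i * H j i"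
        unfolding X_def g_def xi_def H_def by (simp add: FD gradc algebra_simps)
    qed
    note FD2 = FD fd_divc diff_divc
    have efun: "(\<lambda>y. rho (\<phi> y) * (norm (v y))\<^sup>2 / 2 + f (\<phi> y) (grad \<phi> y))
        = (\<lambda>y. rho (\<phi> y) * (\<Sum>k\<in>UNIV. v y $ k * v y $ k) / 2 + f (\<phi> y) (grad \<phi> y))"
      unfolding nsq by (simp add: power2_eq_square)
    have E1: "dt (\<lambda>y. rho (\<phi> y) * (norm (v y))\<^sup>2 / 2 + f (\<phi> y) (grad \<phi> y)) z
        = r1*pt*(\<Sum>k\<in>UNIV. (u k)^2)/2 + r*(\<Sum>k\<in>UNIV. u k*ut k) + fz*pt + (\<Sum>k\<in>UNIV. xi k*Gt k)"
      unfolding efun dt_def r1_def pt_def u_def r_def ut_def fz_def xi_def Gt_def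
      by (simp add: FD2 power2_eq_square sum.distrib sum_distrib_left sum_divide_distrib add_divide_distrib algebra_simps)
    have E2: "v z \<bullet> grad (\<lambda>y. rho (\<phi> y) * (norm (v y))\<^sup>2 / 2 + f (\<phi> y) (grad \<phi> y)) z
        = (\<Sum>i\<in>UNIV. u i*(r1*g i*(\<Sum>k\<in>UNIV. (u k)^2)/2 + r*(\<Sum>k\<in>UNIV. u k*V k i) + fz*g i + (\<Sum>k\<in>UNIV. xi k*H k i)))"
      unfolding efun unfolding inner_vec_def gradc r1_def g_def u_def r_def V_def fz_def xi_def H_def
      by (simp add: FD2 power2_eq_square sum.distrib sum_distrib_left sum_divide_distrib add_divide_distrib algebra_simps)
    have Tc: "\<And>y i. (((2 * eta (\<phi> y)) *\<^sub>R symgrad v y - outer (grad \<phi> y) (df_dgrad f (\<phi> y) (grad \<phi> y)) - p y *\<^sub>R mat 1) *v v y) $ i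
       = (\<Sum>j\<in>UNIV. 2 * eta (\<phi> y) * symgrad v y $ i $ j * v y $ j)
         - frechet_derivative \<phi> (at y) (axis i 1, 0) * (\<Sum>j\<in>UNIV. df_dgrad f (\<phi> y) (grad \<phi> y) $ j * v y $ j)
         - p y * v y $ i"
    proof -
      fix y i
      have "(\<Sum>j\<in>UNIV. p y * mat 1 $ i $ j * v y $ j) = p y * v y $ i"
        by (simp add: mat_def if_distrib[of "\<lambda>t. p y * t * _"] cong: if_cong)
      thus "?thesis y i"
        by (simp add: matrix_vector_mult_def outer_def gradc sum_subtractf sum.distrib sum_distrib_left algebra_simps)
    qed
    have E3: "divg (\<lambda>y. ((2 * eta (\<phi> y)) *\<^sub>R symgrad v y - outer (grad \<phi> y) (df_dgrad f (\<phi> y) (grad \<phi> y)) - p y *\<^sub>R mat 1) *v v y) z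
      = (\<Sum>i\<in>UNIV. \<Sum>j\<in>UNIV. 2*et1*g i*D i j*u j + 2*et*K i j i*u j + 2*et*D i j*V j i)
        - (\<Sum>i\<in>UNIV. H i i*(\<Sum>j\<in>UNIV. xi j*u j) + g i*(\<Sum>j\<in>UNIV. X j i*u j + xi j*V j i))
        - (\<Sum>i\<in>UNIV. pk i*u i + pp*V i i)"
      unfolding et1_def g_def u_def et_def K_def V_def H_def xi_def X_def pk_def pp_def
      by (simp only: divg_def dx_def Tc) (simp add: FD sgz sum_subtractf sum.distrib sum_distrib_left sum_distrib_right algebra_simps)
    have E4: "divg (\<lambda>y. (dt \<phi> y + v y \<bullet> grad \<phi> y) *\<^sub>R df_dgrad f (\<phi> y) (grad \<phi> y)) z
      = (\<Sum>i\<in>UNIV. (P i + (\<Sum>k\<in>UNIV. V k i*g k + u k*H k i))*xi i + (pt + (\<Sum>k\<in>UNIV. u k*g k))*X i i)"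
      unfolding P_def V_def g_def u_def H_def xi_def pt_def X_def
      by (simp only: divg_def dx_def dt_def inner_vec_def gradc vector_scaleR_component inner_real_def)
         (simp add: FD sum.distrib algebra_simps)
    have E5: "divg (\<lambda>y. \<mu> y *\<^sub>R - (m (\<phi> y) *\<^sub>R grad \<mu> y)) z
      = - (\<Sum>i\<in>UNIV. mi i*mm*mi i + mu*(mm1*g i*mi i + mm*Q i i))"
      unfolding mi_def mm_def mu_def mm1_def g_def Q_def
      by (simp only: divg_def dx_def gradc vector_scaleR_component vector_uminus_component)
         (simp add: FD sum.distrib sum_negf sum_subtractf algebra_simps)
    have R1: "frob2 (symgrad v z) = (\<Sum>i\<in>UNIV. \<Sum>j\<in>UNIV. (D i j)^2)"
      unfolding frob2_def sgz ..
    have R2: "(norm (grad \<mu> z))\<^sup>2 = (\<Sum>i\<in>UNIV. (mi i)^2)"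
      unfolding nsq mi_def gradc ..
    have core: "(r1*pt*(\<Sum>k\<in>UNIV. (u k)^2)/2 + r*(\<Sum>k\<in>UNIV. u k*ut k) + fz*pt + (\<Sum>k\<in>UNIV. xi k*Gt k))
     + (\<Sum>i\<in>UNIV. u i*(r1*g i*(\<Sum>k\<in>UNIV. (u k)^2)/2 + r*(\<Sum>k\<in>UNIV. u k*V k i) + fz*g i + (\<Sum>k\<in>UNIV. xi k*H k i)))
     - ((\<Sum>i\<in>UNIV. \<Sum>j\<in>UNIV. 2*et1*g i*D i j*u j + 2*et*K i j i*u j + 2*et*D i j*V j i)
        - (\<Sum>i\<in>UNIV. H i i*(\<Sum>j\<in>UNIV. xi j*u j) + g i*(\<Sum>j\<in>UNIV. X j i*u j + xi j*V j i))
        - (\<Sum>i\<in>UNIV. pk i*u i + pp*V i i))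
     - (\<Sum>i\<in>UNIV. (P i + (\<Sum>k\<in>UNIV. V k i*g k + u k*H k i))*xi i + (pt + (\<Sum>k\<in>UNIV. u k*g k))*X i i)
     + (- (\<Sum>i\<in>UNIV. mi i*mm*mi i + mu*(mm1*g i*mi i + mm*Q i i)))
   = - (2*et*(\<Sum>i\<in>UNIV. \<Sum>j\<in>UNIV. (D i j)^2) + mm*(\<Sum>i\<in>UNIV. (mi i)^2))"
      unfolding D_def
      apply (rule alg_core[where u=u and ut=ut and g=g and Gt=Gt and P=P and xi=xi and mi=mi and pi=pk
          and V=V and H=H and X=X and Q=Q and K=K and r=r and ?r1.0=r1 and ?c1.0=c1 and et=et and ?et1.0=et1
          and mm=mm and ?mm1.0=mm1 and fz=fz and mu=mu and pp=pp and pt=pt and A=A])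
      apply (fact sH)
      apply (fact sG)
      apply (fact xiA)
      apply (fact sK)
      apply (fact sX)
      apply (fact inc)
      apply (fact mom[unfolded D_def])
      apply (fact tr)
      apply (fact ch)
      done
    have et0: "et \<ge> 0" unfolding et_def using \<open>\<forall>s. eta s \<ge> 0\<close> by blast
    have mm0: "mm \<ge> 0" unfolding mm_def using \<open>\<forall>s. m s \<ge> 0\<close> by blast
    have nonneg: "- (2*et*(\<Sum>i\<in>UNIV. \<Sum>j\<in>UNIV. (D i j)^2) + mm*(\<Sum>i\<in>UNIV. (mi i)^2)) \<le> 0"
    proof -
      have "(\<Sum>i\<in>UNIV. \<Sum>j\<in>UNIV. (D i j)^2) \<ge> 0" by (intro sum_nonneg) auto
      moreover have "(\<Sum>i\<in>UNIV. (mi i)^2) \<ge> 0" by (intro sum_nonneg) auto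
      ultimately have "0 \<le> 2*et*(\<Sum>i\<in>UNIV. \<Sum>j\<in>UNIV. (D i j)^2)" "0 \<le> mm*(\<Sum>i\<in>UNIV. (mi i)^2)"
        using et0 mm0 by simp_all
      thus ?thesis by linarith
    qed
    show "?Q z"
      unfolding Let_def E1 E2 E3 E4 E5 R1 R2 et_def[symmetric] mm_def[symmetric]
      using core nonneg by simp
  qed
qed

end
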